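(* Let $f$ and $g$ be transcendental entire functions. If $z_0\in BU(f\circ g)$, then $g(z_0)\in BU(g\circ f)$.
   Context: For an entire function $F$, $F^n$ denotes the $n$-th iterate. The escaping set is $I(F)=\{z: F^n(z)\to\infty\}$, $K(F)=\{z: \exists R>0,\ |F^n(z)|\le R\ \forall n\ge0\}$, and the Bungee set is $BU(F)=\mathbb{C}\setminus(I(F)\cup K(F))$. *)

theory Defs
  imports "HOL-Complex_Analysis.Complex_Analysis" "HOL-Computational_Algebra.Polynomial"
begin

definition transcendental_entire :: "(complex \<Rightarrow> complex) \<Rightarrow> bool" where
  "transcendental_entire F \<longleftrightarrow> F holomorphic_on UNIV \<and> \<not> (\<exists>p. F = poly p)"

definition escaping_set :: "(complex \<Rightarrow> complex) \<Rightarrow> complex set" where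
  "escaping_set F = {z. filterlim (\<lambda>n. (F ^^ n) z) at_infinity sequentially}"

definition bounded_orbit_set :: "(complex \<Rightarrow> complex) \<Rightarrow> complex set" where
  "bounded_orbit_set F = {z. \<exists>R>0. \<forall>n. norm ((F ^^ n) z) \<le> R}"

definition bungee_set :: "(complex \<Rightarrow> complex) \<Rightarrow> complex set" where
  "bungee_set F = UNIV - (escaping_set F \<union> bounded_orbit_set F)"

end

theory Submission
  imports Defs
begin

lemma iter_comm: "((g \<circ> f) ^^ n) (g z) = g (((f \<circ> g) ^^ n) z)"
  by (induction n) auto

lemma iter_suc: "((f \<circ> g) ^^ Suc n) z = f (((g \<circ> f) ^^ n) (g z))"
  using iter_comm[where g=g and f=f and n=n and z=z] by simp

lemma bound_on_ball:
  assumes "continuous_on UNIV h"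
  shows "\<exists>M>0. \<forall>x. norm x \<le> R \<longrightarrow> norm (h (x::complex)) \<le> M"
proof -
  have "compact (h ` cball 0 R)"
    by (rule compact_continuous_image) (auto intro: continuous_on_subset[OF assms])
  then have "bounded (h ` cball 0 R)" by (rule compact_imp_bounded)
  then obtain M where "M > 0" "\<forall>y\<in>h ` cball 0 R. norm y \<le> M" by (auto simp: bounded_pos)
  then show ?thesis by (auto simp: dist_norm)
qed

theorem theorem8:
  fixes f g :: "complex \<Rightarrow> complex" and z0 :: complex
  assumes "transcendental_entire f" and "transcendental_entire g"
    and "z0 \<in> bungee_set (f \<circ> g)"
  shows "g z0 \<in> bungee_set (g \<circ> f)"
proof -
  have cf: "continuous_on UNIV f" and cg: "continuous_on UNIV g"
    using assms(1,2) holomorphic_on_imp_continuous_on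
    unfolding transcendental_entire_def by blast+
  have nI: "z0 \<notin> escaping_set (f \<circ> g)" and nK: "z0 \<notin> bounded_orbit_set (f \<circ> g)"
    using assms(3) unfolding bungee_set_def by auto
  have "g z0 \<notin> bounded_orbit_set (g \<circ> f)"
  proof
    assume "g z0 \<in> bounded_orbit_set (g \<circ> f)"
    then obtain R where R: "R > 0" "\<forall>n. norm (((g \<circ> f) ^^ n) (g z0)) \<le> R"
      unfolding bounded_orbit_set_def by auto
    obtain M where M: "M > 0" "\<forall>x. norm x \<le> R \<longrightarrow> norm (f x) \<le> M"
      using bound_on_ball[OF cf] by blast
    have "\<forall>n. norm (((f \<circ> g) ^^ n) z0) \<le> max M (norm z0)"
    proof
      fix n show "norm (((f \<circ> g) ^^ n) z0) \<le> max M (norm z0)"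
      proof (cases n)
        case 0 then show ?thesis by simp
      next
        case (Suc m)
        then show ?thesis using iter_suc[where f=f and g=g and n=m and z=z0] M R by (metis max.coboundedI1)
      qed
    qed
    then have "z0 \<in> bounded_orbit_set (f \<circ> g)"
      unfolding bounded_orbit_set_def using M(1)
      by (intro CollectI exI[of _ "max M (norm z0)"]) auto
    with nK show False by simp
  qed
  moreover have "g z0 \<notin> escaping_set (g \<circ> f)"
  proof
    assume "g z0 \<in> escaping_set (g \<circ> f)"
    then have L: "filterlim (\<lambda>n. g (((f \<circ> g) ^^ n) z0)) at_infinity sequentially"
      unfolding escaping_set_def by (simp add: iter_comm)
    have "filterlim (\<lambda>n. ((f \<circ> g) ^^ n) z0) at_infinity sequentially"
      unfolding filterlim_at_infinity[OF order_refl]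
    proof (intro allI impI)
      fix r :: real assume "r > 0"
      obtain M where M: "M > 0" "\<forall>x. norm x \<le> r \<longrightarrow> norm (g x) \<le> M"
        using bound_on_ball[OF cg] by blast
      have "eventually (\<lambda>n. M + 1 \<le> norm (g (((f \<circ> g) ^^ n) z0))) sequentially"
        using L M(1) unfolding filterlim_at_infinity[OF order_refl] by auto
      then show "eventually (\<lambda>n. r \<le> norm (((f \<circ> g) ^^ n) z0)) sequentially"
        proof eventually_elim
          case (elim n)
          show ?case
          proof (rule ccontr)
            assume "\<not> r \<le> norm (((f \<circ> g) ^^ n) z0)"
            then have "norm (g (((f \<circ> g) ^^ n) z0)) \<le> M" using M(2) by simp
            with elim show False by simp
          qed
        qed
    qed
    then have "z0 \<in> escaping_set (f \<circ> g)" unfolding escaping_set_def by simp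
    with nI show False by simp
  qed
  ultimately show ?thesis unfolding bungee_set_def by auto
qed

end
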